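(* Fix $\lambda>0$ and let $M_\lambda$ be as in the context. Then $M_\lambda'(x)=0$ for $0<x<1$ and for $1<x<2$, and for all $x>1$, \[ M'_{\lambda}(x+1)=\frac{\int_1^x\lambda\sinh(\lambda t)M'_{\lambda}(t)\,dt+\lambda\sinh(\lambda)}{\cosh(\lambda x)-1}. \]
   Context: For $\lambda>0$, $M_\lambda:[0,\infty)\to\mathbb R$ is defined by $M_\lambda(x)=0$ for $0\le x\le1$ and, for all $x>0$, $M_{\lambda}(x+1)=\int_0^x\frac{\lambda e^{-\lambda t}}{1-e^{-\lambda x}}\bigl(M_{\lambda}(t)+M_{\lambda}(x-t)\bigr)\,dt+1$. This determines $M_\lambda$ uniquely, interval by interval. $M_\lambda(x)$ is the expected number of unit intervals at saturation in the parking process on $(0,x)$ in which left endpoints are drawn from the truncated exponential density $\lambda e^{-\lambda t}/(1-e^{-\lambda(x-1)})$ on $(0,x-1)$, and overlapping candidates are discarded. *)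

theory Defs
  imports "HOL-Analysis.Analysis"
begin

text \<open>M is the function M_lambda of the paper: it vanishes on [0,1] and satisfies the
renewal-type recursion for every x > 0. This determines M uniquely on [0,infinity)
(values at negative arguments are irrelevant).\<close>
definition is_M_lambda :: "real \<Rightarrow> (real \<Rightarrow> real) \<Rightarrow> bool" where
  "is_M_lambda lam M \<longleftrightarrow>
     (\<forall>x. 0 \<le> x \<and> x \<le> 1 \<longrightarrow> M x = 0) \<and>
     (\<forall>x>0. M (x + 1) =
        integral {0..x} (\<lambda>t. lam * exp (- lam * t) / (1 - exp (- lam * x)) * (M t + M (x - t))) + 1)"

end

theory Submission imports Defs begin

lemma alg:
  fixes e u A B m lam :: real
  assumes eu: "e * u = 1" and u: "u > 1" and e: "e > 0"
  shows "lam * ((e*m + (-lam*e*B + e*(u*m)))*(1-e) - (A + e*B)*(lam*e)) / (1-e)^2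
       = lam*(((u - e)/2)*m - lam*(A+B)/2)/((u+e)/2 - 1)"
proof -
  have u': "u = 1/e" using eu e by (simp add: field_simps)
  have e1: "e < 1" using u u' e by (simp add: field_simps)
  have n1: "(1-e)^2 > 0" using e1 by simp
  have d: "(u+e)/2 - 1 = (1-e)^2 / (2*e)" unfolding u' using e
    by (simp add: field_simps power2_eq_square)
  have l: "lam * ((e*m + (-lam*e*B + e*(u*m)))*(1-e) - (A + e*B)*(lam*e)) = lam * (m*(1-e^2) - lam*e*(A+B))"
    using eu by (simp add: algebra_simps power2_eq_square)
  have r: "lam*(((u - e)/2)*m - lam*(A+B)/2) = lam * (m*(1-e^2) - lam*e*(A+B)) / (2*e)"
    unfolding u' using e by (simp add: field_simps power2_eq_square)
  show ?thesis unfolding l r d using e n1 by (simp add: field_simps)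
qed

lemma int_exp:
  fixes a b c :: real
  assumes "a \<le> b" and "c \<noteq> 0"
  shows "((\<lambda>t. exp (c * t)) has_integral (exp (c * b) - exp (c * a)) / c) {a..b}"
proof -
  have "((\<lambda>t. exp (c * t)) has_integral ((\<lambda>t. exp (c * t) / c) b - (\<lambda>t. exp (c * t) / c) a)) {a..b}"
  proof (rule fundamental_theorem_of_calculus[OF assms(1), where f="\<lambda>t. exp (c * t) / c" and f'="\<lambda>t. exp (c * t)"])
    fix t assume "t \<in> {a..b}"
    have "((\<lambda>t. exp (c * t)) has_real_derivative exp (c * t) * (c * 1)) (at t)"
      by (rule DERIV_fun_exp, rule DERIV_cmult, rule DERIV_ident)
    then have "((\<lambda>t. exp (c * t) / c) has_real_derivative exp (c * t) * (c * 1) / c) (at t)"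
      by (rule DERIV_cdivide)
    moreover have "exp (c * t) * (c * 1) / c = exp (c * t)" using assms(2) by simp
    ultimately have "((\<lambda>t. exp (c * t) / c) has_real_derivative exp (c * t)) (at t)"
      by simp
    then show "((\<lambda>t. exp (c * t) / c) has_vector_derivative exp (c * t)) (at t within {a..b})"
      unfolding has_real_derivative_iff_has_vector_derivative[symmetric]
      by (rule has_field_derivative_at_within)
  qed
  then show ?thesis by (simp add: diff_divide_distrib)
qed

context
  fixes lam :: real and M :: "real \<Rightarrow> real"
  assumes lp: "lam > 0" and hM: "is_M_lambda lam M"
begin

lemma M01: "0 \<le> x \<Longrightarrow> x \<le> 1 \<Longrightarrow> M x = 0"
  using hM unfolding is_M_lambda_def by blast

lemma Mrec: "x > 0 \<Longrightarrow> M (x + 1) =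
   integral {0..x} (\<lambda>t. lam * exp (- lam * t) / (1 - exp (- lam * x)) * (M t + M (x - t))) + 1"
  using hM unfolding is_M_lambda_def by blast

lemma M12: assumes "1 < y" "y \<le> 2" shows "M y = 1"
proof -
  have "M ((y-1) + 1) = integral {0..y-1} (\<lambda>t. lam * exp (- lam * t) / (1 - exp (- lam * (y-1))) * (M t + M ((y-1) - t))) + 1"
    using assms by (intro Mrec) auto
  also have "integral {0..y-1} (\<lambda>t. lam * exp (- lam * t) / (1 - exp (- lam * (y-1))) * (M t + M ((y-1) - t))) = integral {0..y-1} (\<lambda>t. 0)"
    using assms by (intro integral_cong) (auto simp: M01)
  finally show ?thesis by simp
qed

definition "Dm t = (if t \<le> 1 then 0 else M t - 1)"

lemma Dm02: "t \<le> 2 \<Longrightarrow> Dm t = 0"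
  by (auto simp: Dm_def M12)

lemma M_Dm: "t \<ge> 0 \<Longrightarrow> M t = Dm t + (if t \<le> 1 then 0 else 1)"
  by (auto simp: Dm_def M01)

lemma intw_aux:
  assumes g: "continuous_on UNIV g" and D: "continuous_on {0..b} Dm" and b: "1 \<le> b"
  shows "(\<lambda>t. g t * M t) integrable_on {0..b}"
proof -
  have i1: "(\<lambda>t. g t * Dm t) integrable_on {0..b}"
    by (intro integrable_continuous_interval continuous_intros continuous_on_subset[OF g] D) auto
  have "(\<lambda>t. if t \<le> 1 then 0 else g t) integrable_on {0..1}"
    by (rule integrable_spike_finite[of "{}" _ _ "\<lambda>t. 0"]) auto
  moreover have "(\<lambda>t. if t \<le> 1 then 0 else g t) integrable_on {1..b}"
    by (rule integrable_spike_finite[of "{1}" _ _ g]) (auto intro: integrable_continuous_interval continuous_on_subset[OF g])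
  ultimately have i2: "(\<lambda>t. if t \<le> 1 then 0 else g t) integrable_on {0..b}"
    using b by (intro Henstock_Kurzweil_Integration.integrable_combine[where a=0 and c=1 and b=b]) auto
  have i3: "(\<lambda>t. g t * Dm t + (if t \<le> 1 then 0 else g t)) integrable_on {0..b}"
    by (intro integrable_add i1 i2)
  show ?thesis
    by (rule integrable_spike_finite[OF _ _ i3, of "{}"]) (auto simp: M_Dm algebra_simps)
qed

definition "Aint x = integral {0..x} (\<lambda>t. exp (-lam*t) * M t)"
definition "Bint x = integral {0..x} (\<lambda>t. exp (lam*t) * M t)"

lemma recA:
  assumes x: "x > 0" and ia: "(\<lambda>t. exp (-lam*t) * M t) integrable_on {0..x}"
    and ib: "(\<lambda>t. exp (lam*t) * M t) integrable_on {0..x}"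
  shows "M (x + 1) = 1 + lam * (Aint x + exp (-lam*x) * Bint x) / (1 - exp (-lam*x))"
proof -
  have hb: "((\<lambda>s. exp (-lam*x) * (exp (lam * s) * M s)) has_integral exp (-lam*x) * Bint x) (cbox 0 x)"
    unfolding Bint_def using ib by (intro has_integral_mult_right) (auto simp: integrable_integral)
  have img: "(\<lambda>t. (1 / (-1::real)) *\<^sub>R t + - ((1 / (-1::real)) *\<^sub>R x)) ` cbox 0 x = {0..x}"
    by (auto intro: image_eqI[where x="x - y" for y])
  have "((\<lambda>t. exp (-lam*x) * (exp (lam*((-1) *\<^sub>R t + x)) * M ((-1) *\<^sub>R t + x))) has_integral
      (1 / \<bar>-1\<bar> ^ DIM(real)) *\<^sub>R (exp (-lam*x) * Bint x)) {0..x}"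
    using has_integral_affinity[OF hb, of "-1" x] img by simp
  moreover have "(\<lambda>t. exp (-lam*x) * (exp (lam*((-1) *\<^sub>R t + x)) * M ((-1) *\<^sub>R t + x)))
      = (\<lambda>t. exp (-lam*t) * M (x - t))"
    by (auto simp: fun_eq_iff mult_exp_exp algebra_simps)
  ultimately have hr: "((\<lambda>t. exp (-lam*t) * M (x - t)) has_integral exp (-lam*x) * Bint x) {0..x}"
    by simp
  have ha: "((\<lambda>t. exp (-lam*t) * M t) has_integral Aint x) {0..x}"
    unfolding Aint_def using ia by (auto simp: integrable_integral)
  have h1: "((\<lambda>t. lam / (1 - exp (-lam*x)) * (exp (-lam*t) * M t + exp (-lam*t) * M (x - t))) has_integral
     lam / (1 - exp (-lam*x)) * (Aint x + exp (-lam*x) * Bint x)) {0..x}"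
    by (intro has_integral_mult_right has_integral_add ha hr)
  have eq1: "(\<lambda>t. lam / (1 - exp (-lam*x)) * (exp (-lam*t) * M t + exp (-lam*t) * M (x - t)))
     = (\<lambda>t. lam * exp (- lam * t) / (1 - exp (- lam * x)) * (M t + M (x - t)))"
    by (auto simp: fun_eq_iff algebra_simps add_divide_distrib)
  have "integral {0..x} (\<lambda>t. lam * exp (- lam * t) / (1 - exp (- lam * x)) * (M t + M (x - t)))
     = lam / (1 - exp (-lam*x)) * (Aint x + exp (-lam*x) * Bint x)"
    using integral_unique[OF h1[unfolded eq1]] .
  then show ?thesis using Mrec[OF x] by simp
qed

lemma Dcont_nat: "continuous_on {0..real n + 2} Dm"
proof (induction n)
  case 0
  show ?case by (rule continuous_on_eq[of _ "\<lambda>t. 0"]) (auto simp: Dm02)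
next
  case (Suc n)
  define b where "b = real n + 2"
  have b: "b \<ge> 2" by (simp add: b_def)
  have Db: "continuous_on {0..b} Dm" using Suc.IH by (simp add: b_def)
  have ia: "(\<lambda>t. exp (-lam*t) * M t) integrable_on {0..b}"
    by (rule intw_aux[OF _ Db]) (use b in \<open>auto intro!: continuous_intros\<close>)
  have ib: "(\<lambda>t. exp (lam * t) * M t) integrable_on {0..b}"
    by (rule intw_aux[OF _ Db]) (use b in \<open>auto intro!: continuous_intros\<close>)
  have cA: "continuous_on {0..b} Aint"
    unfolding Aint_def[abs_def] by (rule indefinite_integral_continuous_1[OF ia])
  have cB: "continuous_on {0..b} Bint"
    unfolding Bint_def[abs_def] by (rule indefinite_integral_continuous_1[OF ib])
  have cA': "continuous_on {2..b+1} (\<lambda>y. Aint (y - 1))"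
    by (rule continuous_on_compose2[OF cA]) (auto intro!: continuous_intros)
  have cB': "continuous_on {2..b+1} (\<lambda>y. Bint (y - 1))"
    by (rule continuous_on_compose2[OF cB]) (auto intro!: continuous_intros)
  have den: "1 - exp (-lam*(y-1)) \<noteq> 0" if "y \<ge> 2" for y
    using that lp by (auto simp: mult_pos_pos)
  have cF: "continuous_on {2..b+1} (\<lambda>y. lam * (Aint (y-1) + exp (-lam*(y-1)) * Bint (y-1)) / (1 - exp (-lam*(y-1))))"
    using den by (intro continuous_intros cA' cB') auto
  have eqF: "Dm y = lam * (Aint (y-1) + exp (-lam*(y-1)) * Bint (y-1)) / (1 - exp (-lam*(y-1)))"
    if "y \<in> {2..b+1}" for y
  proof -
    have y: "y - 1 > 0" "y - 1 \<le> b" using that by auto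
    have "M ((y-1) + 1) = 1 + lam * (Aint (y-1) + exp (-lam*(y-1)) * Bint (y-1)) / (1 - exp (-lam*(y-1)))"
      using y by (intro recA integrable_on_subinterval[OF ia] integrable_on_subinterval[OF ib]) auto
    then show ?thesis using that by (simp add: Dm_def)
  qed
  have "continuous_on {2..b+1} Dm"
    using continuous_on_eq[OF cF] eqF by auto
  moreover have "continuous_on {0..2} Dm"
    by (rule continuous_on_eq[of _ "\<lambda>t. 0"]) (auto simp: Dm02)
  ultimately have "continuous_on ({0..2} \<union> {2..b+1}) Dm"
    by (intro continuous_on_closed_Un) auto
  moreover have "{0..2} \<union> {2..b+1} = {0..real (Suc n) + 2}" using b by (auto simp: b_def)
  ultimately show ?case by simp
qed

lemma Dcont: "continuous_on {0..b} Dm"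
proof -
  have "{0..b} \<subseteq> {0..real (nat \<lceil>b\<rceil>) + 2}" apply auto using le_of_int_ceiling[of b] by linarith
  then show ?thesis using continuous_on_subset[OF Dcont_nat] by blast
qed

lemma intw: assumes "continuous_on UNIV g" shows "(\<lambda>t. g t * M t) integrable_on {0..x}"
proof -
  have "(\<lambda>t. g t * M t) integrable_on {0..max x 1}"
    by (rule intw_aux[OF assms Dcont]) auto
  then show ?thesis by (rule integrable_on_subinterval) auto
qed

lemma iA: "(\<lambda>t. exp (-lam*t) * M t) integrable_on {0..x}"
  by (rule intw) (auto intro!: continuous_intros)
lemma iB: "(\<lambda>t. exp (lam * t) * M t) integrable_on {0..x}"
  by (rule intw) (auto intro!: continuous_intros)

lemma recF: "x > 0 \<Longrightarrow> M (x + 1) = 1 + lam * (Aint x + exp (-lam*x) * Bint x) / (1 - exp (-lam*x))"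
  by (rule recA[OF _ iA iB])

lemma isContM: assumes "y > 1" shows "isCont M y"
proof -
  have "isCont Dm y"
    using continuous_on_interior[OF Dcont[of "y+1"]] assms by simp
  then have "isCont (\<lambda>t. Dm t + 1) y" by (intro continuous_intros)
  moreover have ev: "eventually (\<lambda>t. M t = Dm t + 1) (nhds y)"
    unfolding eventually_nhds using assms
    by (intro exI[of _ "{1<..}"]) (auto simp: Dm_def)
  ultimately show ?thesis using isCont_cong[OF ev] by simp
qed

lemma derAB: assumes "x > 1"
  shows "(Aint has_real_derivative exp (-lam*x) * M x) (at x)"
    and "(Bint has_real_derivative exp (lam * x) * M x) (at x)"
proof -
  have cM: "isCont M x" by (rule isContM[OF assms])
  have c0: "isCont (\<lambda>t. exp (-lam*t) * M t) x"
    by (intro continuous_mult cM) (intro continuous_intros)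
  have c1: "isCont (\<lambda>t. exp (lam * t) * M t) x"
    by (intro continuous_mult cM) (intro continuous_intros)
  have S: "{0..x+1} - {} = {0..x+1}" by simp
  have at: "at x within {0..x+1} = at x"
    by (rule at_within_Icc_at) (use assms in auto)
  have xin: "x \<in> {0..x+1} - {}" using assms by auto
  have h0: "((\<lambda>u. integral {0..u} (\<lambda>t. exp (-lam*t) * M t)) has_vector_derivative exp (-lam*x) * M x) (at x within ({0..x+1} - {}))"
    by (rule integral_has_vector_derivative_continuous_at[OF iA xin _ continuous_at_imp_continuous_within[OF c0]]) simp
  have h1: "((\<lambda>u. integral {0..u} (\<lambda>t. exp (lam * t) * M t)) has_vector_derivative exp (lam * x) * M x) (at x within ({0..x+1} - {}))"
    by (rule integral_has_vector_derivative_continuous_at[OF iB xin _ continuous_at_imp_continuous_within[OF c1]]) simp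
  have eA: "Aint = (\<lambda>u. integral {0..u} (\<lambda>t. exp (-lam*t) * M t))" by (simp add: fun_eq_iff Aint_def)
  have eB: "Bint = (\<lambda>u. integral {0..u} (\<lambda>t. exp (lam * t) * M t))" by (simp add: fun_eq_iff Bint_def)
  show "(Aint has_real_derivative exp (-lam*x) * M x) (at x)"
    using h0 unfolding S at eA[symmetric] has_real_derivative_iff_has_vector_derivative .
  show "(Bint has_real_derivative exp (lam * x) * M x) (at x)"
    using h1 unfolding S at eB[symmetric] has_real_derivative_iff_has_vector_derivative .
qed

lemma derM: assumes x: "x > 1"
  shows "(M has_real_derivative lam * (sinh (lam*x) * M x - lam * (Aint x + Bint x) / 2) / (cosh (lam*x) - 1)) (at (x+1))"
proof -
  define e where "e = exp (-lam*x)"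
  define u where "u = exp (lam*x)"
  have eu: "e * u = 1" by (simp add: e_def u_def flip: exp_add)
  have u1: "u > 1" using x lp by (simp add: u_def)
  have e0: "e > 0" by (simp add: e_def)
  have e1: "1 - e \<noteq> 0" using eu u1 e0 by (metis less_numeral_extra(4) mult_cancel_left1 eq_iff_diff_eq_0)
  note dA = derAB(1)[OF x] and dB = derAB(2)[OF x]
  have de: "((\<lambda>x. exp (-lam*x)) has_real_derivative (-lam) * e) (at x)"
    unfolding e_def by (auto intro!: derivative_eq_intros)
  have dN: "((\<lambda>x. Aint x + exp (-lam*x) * Bint x) has_real_derivative
       e * M x + ((-lam) * e * Bint x + e * (u * M x))) (at x)"
    using DERIV_add[OF dA DERIV_mult[OF de dB]] by (simp add: e_def u_def mult.commute mult.left_commute)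
  have dD: "((\<lambda>x. 1 - exp (-lam*x)) has_real_derivative 0 - (-lam) * e) (at x)"
    by (intro DERIV_diff de DERIV_const)
  have dQ: "((\<lambda>x. (Aint x + exp (-lam*x) * Bint x) / (1 - exp (-lam*x))) has_real_derivative
      ((e * M x + ((-lam) * e * Bint x + e * (u * M x))) * (1 - e) - (Aint x + e * Bint x) * (0 - (-lam) * e)) / ((1 - e) * (1 - e))) (at x)"
    using DERIV_divide[OF dN dD] e1 by (simp add: e_def)
  have dP: "((\<lambda>x. 1 + lam * ((Aint x + exp (-lam*x) * Bint x) / (1 - exp (-lam*x)))) has_real_derivative
      0 + lam * (((e * M x + ((-lam) * e * Bint x + e * (u * M x))) * (1 - e) - (Aint x + e * Bint x) * (0 - (-lam) * e)) / ((1 - e) * (1 - e)))) (at x)"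
    by (intro DERIV_add DERIV_const DERIV_cmult dQ)
  have val: "0 + lam * (((e * M x + ((-lam) * e * Bint x + e * (u * M x))) * (1 - e) - (Aint x + e * Bint x) * (0 - (-lam) * e)) / ((1 - e) * (1 - e)))
      = lam * (sinh (lam*x) * M x - lam * (Aint x + Bint x) / 2) / (cosh (lam*x) - 1)"
  proof -
    have sh: "sinh (lam*x) = (u - e)/2" and ch: "cosh (lam*x) = (u + e)/2"
      by (simp_all add: sinh_def cosh_def u_def e_def)
    show ?thesis unfolding sh ch using alg[OF eu u1 e0, of lam "M x" "Bint x" "Aint x"]
      by (simp add: power2_eq_square)
  qed
  have dP': "((\<lambda>x. 1 + lam * (Aint x + exp (-lam*x) * Bint x) / (1 - exp (-lam*x))) has_real_derivative
      lam * (sinh (lam*x) * M x - lam * (Aint x + Bint x) / 2) / (cosh (lam*x) - 1)) (at x)"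
    using dP unfolding val by (simp add: times_divide_eq_right)
  have "((\<lambda>x. M (x + 1)) has_real_derivative lam * (sinh (lam*x) * M x - lam * (Aint x + Bint x) / 2) / (cosh (lam*x) - 1)) (at x)"
    by (rule has_field_derivative_transform_within_open[OF dP', of "{0<..}"]) (use x in \<open>auto simp: recF\<close>)
  then show ?thesis by (simp add: DERIV_shift)
qed

lemma d01: "0 < t \<Longrightarrow> t < 1 \<Longrightarrow> (M has_real_derivative 0) (at t)"
  by (rule has_field_derivative_transform_within_open[where f="\<lambda>x. 0" and S="{0<..<1}"]) (auto simp: M01)

lemma d12: "1 < t \<Longrightarrow> t < 2 \<Longrightarrow> (M has_real_derivative 0) (at t)"
  by (rule has_field_derivative_transform_within_open[where f="\<lambda>x. 1" and S="{1<..<2}"]) (auto simp: M12)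

lemma AB12: assumes "1 \<le> x" "x \<le> 2"
  shows "Aint x = (exp (-lam) - exp (-lam*x)) / lam" and "Bint x = (exp (lam*x) - exp lam) / lam"
proof -
  have z: "integral {0..1} (\<lambda>t. exp (c*t) * M t) = 0" for c
    by (subst integral_cong[of _ _ "\<lambda>t. 0"]) (auto simp: M01)
  have o: "integral {1..x} (\<lambda>t. exp (c*t) * M t) = integral {1..x} (\<lambda>t. exp (c*t))" for c
    by (rule integral_spike[of "{1}"]) (use assms in \<open>auto simp: M12\<close>)
  have sp: "integral {0..x} (\<lambda>t. exp (c*t) * M t) = (exp (c*x) - exp c) / c" if "c \<noteq> 0" for c
  proof -
    have "(\<lambda>t. exp (c*t) * M t) integrable_on {0..x}"
      by (rule intw) (auto intro!: continuous_intros)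
    then have "integral {0..x} (\<lambda>t. exp (c*t) * M t) = integral {0..1} (\<lambda>t. exp (c*t) * M t) + integral {1..x} (\<lambda>t. exp (c*t) * M t)"
      using assms by (intro Henstock_Kurzweil_Integration.integral_combine[symmetric]) auto
    also have "\<dots> = (exp (c*x) - exp (c*1)) / c"
      unfolding z o using int_exp[OF assms(1) that] by (simp add: integral_unique)
    finally show ?thesis by simp
  qed
  show "Aint x = (exp (-lam) - exp (-lam*x)) / lam"
    using sp[of "-lam"] lp unfolding Aint_def by (simp add: field_simps)
  show "Bint x = (exp (lam*x) - exp lam) / lam"
    using sp[of "lam"] lp unfolding Bint_def by simp
qed

definition "Rf x = lam * sinh (lam*x) * M x - lam^2 * (Aint x + Bint x) / 2"

lemma R12: assumes "1 < x" "x \<le> 2" shows "Rf x = lam * sinh lam"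
proof -
  have "Rf x = lam * sinh (lam*x) - lam^2 * ((exp (-lam) - exp (-lam*x)) / lam + (exp (lam*x) - exp lam) / lam) / 2"
    unfolding Rf_def using AB12[of x] assms M12[of x] by simp
  also have "\<dots> = lam * sinh (lam*x) - lam * ((exp (-lam) - exp (-lam*x)) + (exp (lam*x) - exp lam)) / 2"
    using lp by (simp add: power2_eq_square add_divide_distrib[symmetric])
  also have "\<dots> = lam * sinh lam"
    by (simp add: sinh_def field_simps)
  finally show ?thesis .
qed

lemma derR: assumes t: "t > 2"
  shows "(Rf has_real_derivative lam * sinh (lam*t) * deriv M t) (at t)"
proof -
  have t1: "t - 1 > 1" "t > 1" using t by auto
  have dM: "(M has_real_derivative lam * (sinh (lam*(t-1)) * M (t-1) - lam * (Aint (t-1) + Bint (t-1)) / 2) / (cosh (lam*(t-1)) - 1)) (at t)"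
    using derM[OF t1(1)] by simp
  have dv: "deriv M t = lam * (sinh (lam*(t-1)) * M (t-1) - lam * (Aint (t-1) + Bint (t-1)) / 2) / (cosh (lam*(t-1)) - 1)"
    by (rule DERIV_imp_deriv[OF dM])
  note dA = derAB(1)[OF t1(2)] and dB = derAB(2)[OF t1(2)]
  have ds: "((\<lambda>x. lam * sinh (lam*x)) has_real_derivative lam * (cosh (lam*t) * lam)) (at t)"
    by (auto intro!: derivative_eq_intros)
  have d1: "((\<lambda>x. lam * sinh (lam*x) * M x) has_real_derivative
     lam * (cosh (lam*t) * lam) * M t + deriv M t * (lam * sinh (lam*t))) (at t)"
    using DERIV_mult[OF ds dM] unfolding dv .
  have d2: "((\<lambda>x. lam^2 * (Aint x + Bint x) / 2) has_real_derivative
     lam^2 * (exp (-lam*t) * M t + exp (lam*t) * M t) / 2) (at t)"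
    using DERIV_cdivide[OF DERIV_cmult[OF DERIV_add[OF dA dB]], of "lam^2" 2] .
  have d3: "(Rf has_real_derivative
     lam * (cosh (lam*t) * lam) * M t + deriv M t * (lam * sinh (lam*t)) - lam^2 * (exp (-lam*t) * M t + exp (lam*t) * M t) / 2) (at t)"
    using DERIV_diff[OF d1 d2] unfolding Rf_def[abs_def] .
  have eq: "lam * (cosh (lam*t) * lam) * M t = lam^2 * (exp (-lam*t) * M t + exp (lam*t) * M t) / 2"
    by (simp add: cosh_def power2_eq_square algebra_simps)
  have eq2: "lam * (cosh (lam*t) * lam) * M t + deriv M t * (lam * sinh (lam*t)) - lam^2 * (exp (-lam*t) * M t + exp (lam*t) * M t) / 2
     = lam * sinh (lam*t) * deriv M t" unfolding eq by simp
  show ?thesis using d3 unfolding eq2 .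
qed

lemma contR: "continuous_on {2..x} Rf"
proof (rule continuous_at_imp_continuous_on, intro ballI)
  fix t assume "t \<in> {2..x}"
  then have t: "t > 1" by auto
  have cM: "isCont M t" by (rule isContM[OF t])
  have cA: "isCont Aint t" by (rule DERIV_isCont[OF derAB(1)[OF t]])
  have cB: "isCont Bint t" by (rule DERIV_isCont[OF derAB(2)[OF t]])
  show "isCont Rf t" unfolding Rf_def[abs_def]
    by (intro continuous_intros cM cA cB) simp
qed

lemma E: assumes x: "x > 1"
  shows "((\<lambda>t. lam * sinh (lam*t) * deriv M t) has_integral (Rf x - lam * sinh lam)) {1..x}"
proof -
  have E12: "((\<lambda>t. lam * sinh (lam*t) * deriv M t) has_integral (Rf y - lam * sinh lam)) {1..y}"
    if "1 < y" "y \<le> 2" for y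
  proof -
    have "((\<lambda>t. 0) has_integral 0) (cbox 1 y)" by simp
    then have "((\<lambda>t. lam * sinh (lam*t) * deriv M t) has_integral 0) (cbox 1 y)"
    proof (rule has_integral_spike_interior)
      fix t assume "t \<in> box 1 y"
      then have "1 < t" "t < 2" using that by auto
      then show "lam * sinh (lam*t) * deriv M t = 0"
        using DERIV_imp_deriv[OF d12] by simp
    qed
    then show ?thesis using R12[OF that] by simp
  qed
  show ?thesis
  proof (cases "x \<le> 2")
    case True
    then show ?thesis using E12 x by blast
  next
    case False
    have h1: "((\<lambda>t. lam * sinh (lam*t) * deriv M t) has_integral 0) {1..2}"
      using E12[of 2] R12[of 2] by simp
    have h2: "((\<lambda>t. lam * sinh (lam*t) * deriv M t) has_integral (Rf x - Rf 2)) {2..x}"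
    proof (rule fundamental_theorem_of_calculus_interior[OF _ contR])
      show "2 \<le> x" using False by simp
      fix t assume "t \<in> {2<..<x}"
      then have "t > 2" by simp
      then show "(Rf has_vector_derivative lam * sinh (lam*t) * deriv M t) (at t)"
        using derR has_real_derivative_iff_has_vector_derivative by blast
    qed
    have "((\<lambda>t. lam * sinh (lam*t) * deriv M t) has_integral (0 + (Rf x - Rf 2))) {1..x}"
      using False by (intro has_integral_combine[OF _ _ h1 h2]) auto
    then show ?thesis using R12[of 2] by simp
  qed
qed

end

theorem mainTheorem7:
  fixes lam :: real and M :: "real \<Rightarrow> real"
  assumes "lam > 0" and "is_M_lambda lam M"
  shows "(\<forall>x. (0 < x \<and> x < 1) \<or> (1 < x \<and> x < 2) \<longrightarrow> (M has_real_derivative 0) (at x))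
    \<and> (\<forall>x>1. (M has_real_derivative
            ((integral {1..x} (\<lambda>t. lam * sinh (lam * t) * deriv M t) + lam * sinh lam)
              / (cosh (lam * x) - 1))) (at (x + 1)))"
proof (intro conjI allI impI)
  fix x :: real
  assume "(0 < x \<and> x < 1) \<or> (1 < x \<and> x < 2)"
  then show "(M has_real_derivative 0) (at x)"
    using d01[OF assms] d12[OF assms] by blast
next
  fix x :: real
  assume x: "x > 1"
  have i: "integral {1..x} (\<lambda>t. lam * sinh (lam * t) * deriv M t) = Rf lam M x - lam * sinh lam"
    using integral_unique[OF E[OF assms x]] by simp
  have "integral {1..x} (\<lambda>t. lam * sinh (lam * t) * deriv M t) + lam * sinh lam
      = lam * (sinh (lam*x) * M x - lam * (Aint lam M x + Bint lam M x) / 2)"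
    unfolding i Rf_def[OF assms] by (simp add: power2_eq_square algebra_simps)
  then show "(M has_real_derivative
            ((integral {1..x} (\<lambda>t. lam * sinh (lam * t) * deriv M t) + lam * sinh lam)
              / (cosh (lam * x) - 1))) (at (x + 1))"
    using derM[OF assms x] by simp
qed

end
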